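(* Fix integers $a,b\ge 2$ and $\varepsilon>0$. Let $n\to\infty$ and let $m=m(n)$ satisfy $m/n\to\infty$. Then all oriented hypergraphs $O\in\mathcal{O}(a,n,m)$, except for $o(|\mathcal{O}(a,n,m)|)$ of them, have the following property: for every coloring $C:[n]\to[b]$ and every $a$-tuple of colors $s=(s_1,\dots,s_a)\in[b]^a$, the number of hyperedges of $O$ whose color sequence with respect to $C$ is $s$ lies in the interval $\left[\left(\prod_{i=1}^a\frac{n_{s_i}^C}{n}-\varepsilon\right)m,\ \left(\prod_{i=1}^a\frac{n_{s_i}^C}{n}+\varepsilon\right)m\right]$.
   Context: An oriented $a$-uniform hypergraph on vertex set $[n]$ is a set of hyperedges, each an ordered sequence of $a$ distinct vertices, such that no two hyperedges consist of the same vertex set (i.e., an $a$-uniform hypergraph together with an independent total ordering of the vertices of each hyperedge). $\mathcal{O}(a,n,m)$ is the family of all oriented $a$-uniform hypergraphs on $[n]$ with exactly $m$ hyperedges. A coloring $C:[n]\to[b]$ is an arbitrary map; $n_j^C$ is the number of vertices of color $j$. The color sequence of a hyperedge $(v_1,\dots,v_a)$ is $(C(v_1),\dots,C(v_a))$. *)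

theory Defs
  imports Complex_Main "HOL-Library.Landau_Symbols"
begin

definition oriented_edges :: "nat \<Rightarrow> nat \<Rightarrow> nat list set" where
  "oriented_edges a n = {e. length e = a \<and> distinct e \<and> set e \<subseteq> {1..n}}"

definition oriented_hypergraphs :: "nat \<Rightarrow> nat \<Rightarrow> nat \<Rightarrow> nat list set set" where
  "oriented_hypergraphs a n m =
     {H. H \<subseteq> oriented_edges a n \<and> inj_on set H \<and> card H = m}"

definition color_count :: "nat \<Rightarrow> (nat \<Rightarrow> nat) \<Rightarrow> nat \<Rightarrow> nat" where
  "color_count n C j = card {v \<in> {1..n}. C v = j}"

definition edges_with_colors :: "nat list set \<Rightarrow> (nat \<Rightarrow> nat) \<Rightarrow> nat list \<Rightarrow> nat" where
  "edges_with_colors H C s = card {e \<in> H. map C e = s}"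

definition well_distributed ::
  "nat \<Rightarrow> nat \<Rightarrow> nat \<Rightarrow> nat \<Rightarrow> real \<Rightarrow> nat list set \<Rightarrow> bool" where
  "well_distributed a b n m \<epsilon> H \<longleftrightarrow>
    (\<forall>C. (\<forall>v\<in>{1..n}. C v \<in> {1..b}) \<longrightarrow>
      (\<forall>s. length s = a \<and> set s \<subseteq> {1..b} \<longrightarrow>
         (let p = (\<Prod>i<a. real (color_count n C (s ! i)) / real n) in
           (p - \<epsilon>) * real m \<le> real (edges_with_colors H C s) \<and>
           real (edges_with_colors H C s) \<le> (p + \<epsilon>) * real m)))"

end

theory Submission
  imports Defs "HOL-Combinatorics.Multiset_Permutations" "HOL-Library.FuncSet"
begin

definition Fam :: "'e set \<Rightarrow> ('e \<Rightarrow> 'k) \<Rightarrow> nat \<Rightarrow> 'e set set" where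
  "Fam V \<kappa> m = {H. H \<subseteq> V \<and> inj_on \<kappa> H \<and> card H = m}"

lemma Fam_finite: "finite V \<Longrightarrow> finite (Fam V \<kappa> m)"
  unfolding Fam_def by (rule finite_subset[of _ "Pow V"]) auto

lemma Fam_zero: "finite V \<Longrightarrow> Fam V \<kappa> 0 = {{}}"
  unfolding Fam_def by (auto dest: finite_subset)

lemma Fam_empty: "Fam {} \<kappa> (Suc m) = {}"
  unfolding Fam_def by auto

lemma Fam_split:
  assumes fin: "finite V" and x: "\<forall>e\<in>V. \<kappa> e \<noteq> x"
  shows "Fam (V \<union> {e\<in>V'. \<kappa> e = x}) \<kappa> (Suc m) =
     Fam V \<kappa> (Suc m) \<union> (\<Union>e\<in>{e\<in>V'. \<kappa> e = x}. insert e ` Fam V \<kappa> m)"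
proof (intro equalityI subsetI)
  fix H assume H: "H \<in> Fam (V \<union> {e\<in>V'. \<kappa> e = x}) \<kappa> (Suc m)"
  show "H \<in> Fam V \<kappa> (Suc m) \<union> (\<Union>e\<in>{e\<in>V'. \<kappa> e = x}. insert e ` Fam V \<kappa> m)"
  proof (cases "\<exists>e\<in>H. \<kappa> e = x")
    case False
    then show ?thesis using H unfolding Fam_def by auto
  next
    case True
    then obtain e where e: "e \<in> H" "\<kappa> e = x" by blast
    have fH: "finite H" using H card_ge_0_finite unfolding Fam_def by force
    have "H - {e} \<subseteq> V"
    proof
      fix f assume f: "f \<in> H - {e}"
      then have "\<kappa> f \<noteq> x" using H e unfolding Fam_def inj_on_def by auto
      then show "f \<in> V" using f H unfolding Fam_def by auto
    qed
    moreover have "e \<in> V'" using e H x unfolding Fam_def by auto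
    moreover have "H = insert e (H - {e})" using e by auto
    moreover have "card (H - {e}) = m" using H e fH unfolding Fam_def by auto
    ultimately show ?thesis using H e unfolding Fam_def
      by (auto intro!: bexI[of _ e] image_eqI[of _ _ "H - {e}"] inj_on_subset[of _ H])
  qed
next
  fix H assume H: "H \<in> Fam V \<kappa> (Suc m) \<union> (\<Union>e\<in>{e\<in>V'. \<kappa> e = x}. insert e ` Fam V \<kappa> m)"
  then show "H \<in> Fam (V \<union> {e\<in>V'. \<kappa> e = x}) \<kappa> (Suc m)"
  proof
    assume "H \<in> Fam V \<kappa> (Suc m)" then show ?thesis unfolding Fam_def by auto
  next
    assume "H \<in> (\<Union>e\<in>{e\<in>V'. \<kappa> e = x}. insert e ` Fam V \<kappa> m)"
    then obtain e G where e: "e \<in> V'" "\<kappa> e = x" and G: "G \<in> Fam V \<kappa> m" and HG: "H = insert e G" by auto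
    have "finite G" using G fin unfolding Fam_def by (auto dest: finite_subset)
    moreover have "e \<notin> G" "x \<notin> \<kappa> ` G" using G x e unfolding Fam_def by auto
    ultimately show ?thesis using G e HG unfolding Fam_def by auto
  qed
qed

lemma Fam_sum_split:
  fixes \<phi> :: "'e \<Rightarrow> real"
  assumes fin: "finite V" "finite V'" and x: "\<forall>e\<in>V. \<kappa> e \<noteq> x"
  shows "(\<Sum>H\<in>Fam (V \<union> {e\<in>V'. \<kappa> e = x}) \<kappa> (Suc m). \<Prod>e\<in>H. \<phi> e) =
     (\<Sum>H\<in>Fam V \<kappa> (Suc m). \<Prod>e\<in>H. \<phi> e) + (\<Sum>e\<in>{e\<in>V'. \<kappa> e = x}. \<phi> e) * (\<Sum>H\<in>Fam V \<kappa> m. \<Prod>e\<in>H. \<phi> e)"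
proof -
  let ?X = "{e\<in>V'. \<kappa> e = x}"
  have fX: "finite ?X" using fin by auto
  have disj1: "Fam V \<kappa> (Suc m) \<inter> (\<Union>e\<in>?X. insert e ` Fam V \<kappa> m) = {}"
    using x unfolding Fam_def by auto
  have fin2: "finite (\<Union>e\<in>?X. insert e ` Fam V \<kappa> m)" using fX Fam_finite[OF fin(1)] by auto
  have eq2: "(\<Sum>H\<in>(\<Union>e\<in>?X. insert e ` Fam V \<kappa> m). \<Prod>e\<in>H. \<phi> e) =
       (\<Sum>e\<in>?X. \<Sum>H\<in>insert e ` Fam V \<kappa> m. \<Prod>e\<in>H. \<phi> e)"
  proof (rule sum.UNION_disjoint[OF fX])
    show "\<forall>e\<in>?X. finite (insert e ` Fam V \<kappa> m)" using Fam_finite[OF fin(1)] by auto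
    show "\<forall>e\<in>?X. \<forall>f\<in>?X. e \<noteq> f \<longrightarrow> insert e ` Fam V \<kappa> m \<inter> insert f ` Fam V \<kappa> m = {}"
      using x unfolding Fam_def by auto
  qed
  have eq3: "(\<Sum>H\<in>insert e ` Fam V \<kappa> m. \<Prod>e\<in>H. \<phi> e) = \<phi> e * (\<Sum>H\<in>Fam V \<kappa> m. \<Prod>e\<in>H. \<phi> e)"
    if e: "e \<in> ?X" for e
  proof -
    have eV: "e \<notin> V" using e x by auto
    have inj: "inj_on (insert e) (Fam V \<kappa> m)"
      unfolding inj_on_def Fam_def using eV by auto
    have "(\<Sum>H\<in>insert e ` Fam V \<kappa> m. \<Prod>e\<in>H. \<phi> e) = (\<Sum>H\<in>Fam V \<kappa> m. \<Prod>e\<in>insert e H. \<phi> e)"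
      by (simp add: sum.reindex[OF inj])
    also have "\<dots> = (\<Sum>H\<in>Fam V \<kappa> m. \<phi> e * (\<Prod>e\<in>H. \<phi> e))"
    proof (rule sum.cong[OF refl])
      fix H assume "H \<in> Fam V \<kappa> m"
      then have "finite H" "e \<notin> H" using fin eV unfolding Fam_def by (auto dest: finite_subset)
      then show "(\<Prod>e\<in>insert e H. \<phi> e) = \<phi> e * (\<Prod>e\<in>H. \<phi> e)" by simp
    qed
    finally show ?thesis by (simp add: sum_distrib_left)
  qed
  show ?thesis
    unfolding Fam_split[OF fin(1) x]
    by (simp add: sum.union_disjoint[OF Fam_finite[OF fin(1)] fin2 disj1] eq2 eq3 sum_distrib_right)
qed


lemma amgm_aux:
  fixes x \<mu> :: real
  assumes "x \<ge> 0" "\<mu> \<ge> 0"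
  shows "x ^ m * ((m + 1) * \<mu> - m * x) \<le> \<mu> ^ (m + 1)"
proof (induction m)
  case 0 then show ?case by simp
next
  case (Suc m)
  have "x ^ Suc m * ((Suc m + 1) * \<mu> - Suc m * x) - \<mu> * (x ^ m * ((m + 1) * \<mu> - m * x))
        = - (x ^ m * ((m + 1) * (\<mu> - x)^2))"
    by (simp add: algebra_simps power2_eq_square)
  moreover have "x ^ m * ((m + 1) * (\<mu> - x)^2) \<ge> 0" using assms by simp
  moreover have "\<mu> * (x ^ m * ((m + 1) * \<mu> - m * x)) \<le> \<mu> * \<mu> ^ (m + 1)"
    using mult_left_mono[OF Suc.IH assms(2)] by (simp add: add.commute)
  ultimately show ?case by simp
qed

lemma key_ineq:
  fixes S w :: real and M m :: nat
  assumes S: "S \<ge> 0" and w: "w \<ge> 0" and M0: "M = 0 \<Longrightarrow> S = 0"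
  shows "real (M choose Suc m) * (S / M) ^ Suc m + w * (real (M choose m) * (S / M) ^ m)
         \<le> real (Suc M choose Suc m) * ((S + w) / Suc M) ^ Suc m"
proof (cases "M = 0")
  case True
  then show ?thesis using M0 w by (cases m) auto
next
  case False
  define x where "x = S / M"
  define \<mu> where "\<mu> = (S + w) / Suc M"
  have x0: "x \<ge> 0" and \<mu>0: "\<mu> \<ge> 0" using S w by (auto simp: x_def \<mu>_def)
  have wdef: "w = (M + 1) * \<mu> - M * x" using False by (simp add: x_def \<mu>_def field_simps)
  have b1: "real (M choose Suc m) * (m + 1) = real (M choose m) * (real M - m)"
  proof (cases "m \<le> M")
    case True
    have "(M choose Suc m) * (Suc m) = (M choose m) * (M - m)"
      by (metis binomial_absorb_comp binomial_absorption mult.commute)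
    then have "real ((M choose Suc m) * (Suc m)) = real ((M choose m) * (M - m))" by simp
    then show ?thesis using True by (simp add: of_nat_diff algebra_simps)
  next
    case False then show ?thesis by (simp add: binomial_eq_0)
  qed
  have b2: "real (Suc M choose Suc m) * (m + 1) = real (M choose m) * (M + 1)"
  proof -
    have "Suc M * (M choose m) = Suc m * (Suc M choose Suc m)" by (rule Suc_times_binomial[symmetric])
    then have "real (Suc M * (M choose m)) = real (Suc m * (Suc M choose Suc m))" by simp
    then show ?thesis by (simp add: algebra_simps)
  qed
  have "(real (M choose Suc m) * x ^ Suc m + w * (real (M choose m) * x ^ m)) * (m + 1)
        = real (M choose Suc m) * (m + 1) * x ^ Suc m + w * (real (M choose m) * x ^ m) * (m + 1)"
    by (simp add: algebra_simps)
  also have "\<dots> = real (M choose m) * (real M - m) * x ^ Suc m + w * (real (M choose m) * x ^ m) * (m + 1)"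
    by (simp only: b1)
  also have "\<dots> = real (M choose m) * ((M + 1) * (x ^ m * ((m + 1) * \<mu> - m * x)))"
    unfolding wdef by (simp add: algebra_simps)
  also have "\<dots> \<le> real (M choose m) * ((M + 1) * \<mu> ^ (m + 1))"
    using amgm_aux[OF x0 \<mu>0, of m] by (intro mult_left_mono) (auto simp: add.commute)
  also have "\<dots> = (real (M choose m) * (M + 1)) * \<mu> ^ Suc m"
    by (simp add: algebra_simps)
  also have "\<dots> = (real (Suc M choose Suc m) * (m + 1)) * \<mu> ^ Suc m"
    by (simp only: b2)
  also have "\<dots> = real (Suc M choose Suc m) * \<mu> ^ Suc m * (m + 1)"
    by (simp only: ac_simps)
  finally show ?thesis unfolding x_def[symmetric] \<mu>_def[symmetric]
    by (simp del: of_nat_Suc)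
qed


lemma keys_insert: "{e\<in>V. \<kappa> e \<in> insert x W} = {e\<in>V. \<kappa> e \<in> W} \<union> {e\<in>V. \<kappa> e = x}"
  by auto

lemma Fam_maclaurin:
  fixes \<phi> :: "'e \<Rightarrow> real"
  assumes V: "finite V" and \<phi>: "\<forall>e\<in>V. \<phi> e \<ge> 0" and W: "finite W"
  shows "(\<Sum>H\<in>Fam {e\<in>V. \<kappa> e \<in> W} \<kappa> m. \<Prod>e\<in>H. \<phi> e)
     \<le> real (card W choose m) * ((\<Sum>e\<in>{e\<in>V. \<kappa> e \<in> W}. \<phi> e) / card W) ^ m"
  using W
proof (induction W arbitrary: m rule: finite_induct)
  case empty
  then show ?case by (cases m) (auto simp: Fam_zero Fam_empty)
next
  case (insert x W)
  let ?VW = "{e\<in>V. \<kappa> e \<in> W}"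
  let ?X = "{e\<in>V. \<kappa> e = x}"
  have fVW: "finite ?VW" using V by auto
  have fX: "finite ?X" using V by auto
  show ?case
  proof (cases m)
    case 0
    then show ?thesis using V by (simp add: Fam_zero)
  next
    case (Suc k)
    define S where "S = (\<Sum>e\<in>?VW. \<phi> e)"
    define w where "w = (\<Sum>e\<in>?X. \<phi> e)"
    have S0: "S \<ge> 0" unfolding S_def using \<phi> by (auto intro: sum_nonneg)
    have w0: "w \<ge> 0" unfolding w_def using \<phi> by (auto intro: sum_nonneg)
    have xn: "\<forall>e\<in>?VW. \<kappa> e \<noteq> x" using insert.hyps by auto
    have sumU: "(\<Sum>e\<in>{e\<in>V. \<kappa> e \<in> insert x W}. \<phi> e) = S + w"
      unfolding keys_insert S_def w_def by (rule sum.union_disjoint) (use V insert.hyps in auto)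
    have M0: "card W = 0 \<Longrightarrow> S = 0" using insert.hyps(1) by (simp add: S_def)
    have "(\<Sum>H\<in>Fam {e\<in>V. \<kappa> e \<in> insert x W} \<kappa> m. \<Prod>e\<in>H. \<phi> e)
        = (\<Sum>H\<in>Fam ?VW \<kappa> (Suc k). \<Prod>e\<in>H. \<phi> e) + w * (\<Sum>H\<in>Fam ?VW \<kappa> k. \<Prod>e\<in>H. \<phi> e)"
      unfolding keys_insert Suc w_def by (rule Fam_sum_split[OF fVW V xn])
    also have "\<dots> \<le> real (card W choose Suc k) * (S / card W) ^ Suc k
                    + w * (real (card W choose k) * (S / card W) ^ k)"
      unfolding S_def using insert.IH[of "Suc k"] insert.IH[of k] w0 by (intro add_mono mult_left_mono) (simp_all del: power_Suc)
    also have "\<dots> \<le> real (Suc (card W) choose Suc k) * ((S + w) / Suc (card W)) ^ Suc k"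
      by (rule key_ineq[OF S0 w0 M0])
    finally have fin: "(\<Sum>H\<in>Fam {e\<in>V. \<kappa> e \<in> insert x W} \<kappa> m. \<Prod>e\<in>H. \<phi> e)
       \<le> real (Suc (card W) choose Suc k) * ((S + w) / Suc (card W)) ^ Suc k" .
    have cW: "card (insert x W) = Suc (card W)" using insert.hyps by simp
    show ?thesis unfolding Suc sumU cW using fin unfolding Suc .
  qed
qed

lemma Fam_card:
  assumes V: "finite V" and W: "finite W" and c: "\<forall>x\<in>W. card {e\<in>V. \<kappa> e = x} = c"
  shows "card (Fam {e\<in>V. \<kappa> e \<in> W} \<kappa> m) = (card W choose m) * c ^ m"
  using W c
proof (induction W arbitrary: m rule: finite_induct)
  case empty
  then show ?case by (cases m) (auto simp: Fam_zero Fam_empty)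
next
  case (insert x W)
  let ?VW = "{e\<in>V. \<kappa> e \<in> W}"
  have fVW: "finite ?VW" using V by auto
  have xn: "\<forall>e\<in>?VW. \<kappa> e \<noteq> x" using insert.hyps by auto
  show ?case
  proof (cases m)
    case 0
    then show ?thesis using V by (simp add: Fam_zero)
  next
    case (Suc k)
    have "real (card (Fam {e\<in>V. \<kappa> e \<in> insert x W} \<kappa> m))
       = (\<Sum>H\<in>Fam {e\<in>V. \<kappa> e \<in> insert x W} \<kappa> m. \<Prod>e\<in>H. (1::real))" by simp
    also have "\<dots> = (\<Sum>H\<in>Fam ?VW \<kappa> (Suc k). \<Prod>e\<in>H. (1::real))
         + (\<Sum>e\<in>{e\<in>V. \<kappa> e = x}. (1::real)) * (\<Sum>H\<in>Fam ?VW \<kappa> k. \<Prod>e\<in>H. (1::real))"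
      unfolding keys_insert Suc by (rule Fam_sum_split[OF fVW V xn])
    also have "\<dots> = real (card (Fam ?VW \<kappa> (Suc k))) + real c * real (card (Fam ?VW \<kappa> k))"
      using insert.prems by simp
    also have "\<dots> = real ((card W choose Suc k) * c ^ Suc k + c * ((card W choose k) * c ^ k))"
      using insert.IH insert.prems by simp
    also have "\<dots> = real ((card (insert x W) choose m) * c ^ m)"
      using insert.hyps by (simp add: Suc algebra_simps)
    finally show ?thesis by (simp only: of_nat_eq_iff)
  qed
qed


lemma exponent_bound:
  fixes q \<delta> :: real
  assumes q: "0 \<le> q" "q \<le> 1" and d: "0 < \<delta>" "\<delta> \<le> 1"
  shows "ln (1 + (\<delta>/4) * q) - (q + \<delta>) * ln (1 + \<delta>/4) \<le> - (\<delta>^2 / 8)"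
proof -
  define t where "t = \<delta> / 4"
  have t: "0 \<le> t" "t \<le> 1" using d by (auto simp: t_def)
  have l1: "ln (1 + t * q) \<le> t * q" using t q by (intro ln_add_one_self_le_self) auto
  have l2: "t - t^2 \<le> ln (1 + t)" using t by (intro ln_one_plus_pos_lower_bound) auto
  have "(q + \<delta>) * (t - t^2) \<le> (q + \<delta>) * ln (1 + t)" using l2 q d by (intro mult_left_mono) auto
  moreover have "(q + \<delta>) * t^2 \<le> 2 * t^2" using q d by (intro mult_right_mono) auto
  ultimately have "ln (1 + t * q) - (q + \<delta>) * ln (1 + t) \<le> t*q - (q+\<delta>)*t + 2 * t^2"
    using l1 by (simp add: algebra_simps)
  also have "\<dots> = - (\<delta>^2 / 8)" by (simp add: t_def power2_eq_square field_simps)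
  finally show ?thesis by (simp add: t_def)
qed

lemma prod_if_card:
  assumes "finite H"
  shows "(\<Prod>e\<in>H. if e \<in> G then (l::real) else 1) = l ^ card (H \<inter> G)"
proof -
  have "(\<Prod>e\<in>H. if e \<in> G then l else 1) = (\<Prod>e\<in>H \<inter> G. l) * (\<Prod>e\<in>H - G. 1)"
    using assms by (simp add: prod.If_cases)
  then show ?thesis by simp
qed

lemma concentration:
  fixes V G :: "'e set" and \<kappa> :: "'e \<Rightarrow> 'k" and c :: nat and \<delta> :: real
  assumes V: "finite V" and G: "G \<subseteq> V" and c: "\<forall>x\<in>\<kappa>`V. card {e\<in>V. \<kappa> e = x} = c"
    and d: "0 < \<delta>" "\<delta> \<le> 1"
  shows "real (card {H\<in>Fam V \<kappa> m. real (card (H \<inter> G)) \<ge> (card G / card V + \<delta>) * m})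
         \<le> exp (- (\<delta>^2 / 8) * m) * card (Fam V \<kappa> m)"
proof -
  define q where "q = card G / card V"
  define t where "t = \<delta> / 4"
  define l where "l = 1 + t"
  define \<phi> where "\<phi> e = (if e \<in> G then l else 1)" for e
  define Bad where "Bad = {H\<in>Fam V \<kappa> m. real (card (H \<inter> G)) \<ge> (q + \<delta>) * m}"
  have l1: "l \<ge> 1" using d by (simp add: l_def t_def)
  have q01: "0 \<le> q" "q \<le> 1" using G V by (auto simp: q_def card_mono divide_le_eq_1)
  have VV: "{e\<in>V. \<kappa> e \<in> \<kappa> ` V} = V" by auto
  have fW: "finite (\<kappa> ` V)" using V by simp
  have cardV: "card V = c * card (\<kappa> ` V)"
  proof -
    have "card V = (\<Sum>e\<in>V. 1::nat)" by simp
    also have "\<dots> = (\<Sum>x\<in>\<kappa>`V. \<Sum>e\<in>{e\<in>V. \<kappa> e = x}. 1)" by (rule sum.image_gen[OF V])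
    also have "\<dots> = (\<Sum>x\<in>\<kappa>`V. c)" using c by (intro sum.cong) auto
    finally show ?thesis by simp
  qed
  have famcard: "card (Fam V \<kappa> m) = (card (\<kappa>`V) choose m) * c ^ m"
    using Fam_card[OF V fW c, of m] unfolding VV .
  have phisum: "(\<Sum>e\<in>V. \<phi> e) = card V + t * card G"
  proof -
    have "(\<Sum>e\<in>V. \<phi> e) = (\<Sum>e\<in>V. 1 + (if e \<in> G then t else 0))"
      by (intro sum.cong) (auto simp: \<phi>_def l_def)
    also have "\<dots> = card V + t * card G" using G V
      by (simp add: sum.distrib sum.If_cases Int_absorb1)
    finally show ?thesis .
  qed
  have sumbound: "(\<Sum>H\<in>Fam V \<kappa> m. \<Prod>e\<in>H. \<phi> e) \<le> card (Fam V \<kappa> m) * (1 + t * q) ^ m"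
  proof (cases "V = {}")
    case True
    then show ?thesis by (cases m) (auto simp: Fam_zero Fam_empty)
  next
    case False
    then have N0: "card (\<kappa>`V) > 0" using fW by auto
    have c0: "c \<noteq> 0" using cardV False V by auto
    have "(\<Sum>H\<in>Fam V \<kappa> m. \<Prod>e\<in>H. \<phi> e)
        \<le> real (card (\<kappa>`V) choose m) * ((\<Sum>e\<in>V. \<phi> e) / card (\<kappa>`V)) ^ m"
      using Fam_maclaurin[OF V _ fW, where \<phi>=\<phi> and m=m and \<kappa>=\<kappa>] l1 unfolding VV by (auto simp: \<phi>_def)
    also have "(\<Sum>e\<in>V. \<phi> e) / card (\<kappa>`V) = c * (1 + t * q)"
      using N0 cardV False V c0 unfolding phisum q_def by (simp add: field_simps)
    finally show ?thesis unfolding famcard by (simp add: power_mult_distrib)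
  qed
  have "real (card Bad) * l powr ((q + \<delta>) * m) = (\<Sum>H\<in>Bad. l powr ((q + \<delta>) * m))" by simp
  also have "\<dots> \<le> (\<Sum>H\<in>Bad. \<Prod>e\<in>H. \<phi> e)"
  proof (rule sum_mono)
    fix H assume H: "H \<in> Bad"
    then have fH: "finite H" using V unfolding Bad_def Fam_def by (auto dest: finite_subset)
    have "l powr ((q + \<delta>) * m) \<le> l powr (real (card (H \<inter> G)))"
      using H l1 unfolding Bad_def by (intro powr_mono) auto
    also have "\<dots> = l ^ card (H \<inter> G)" using l1 by (simp add: powr_realpow)
    finally show "l powr ((q + \<delta>) * m) \<le> (\<Prod>e\<in>H. \<phi> e)"
      unfolding \<phi>_def using prod_if_card[OF fH] by simp
  qed
  also have "\<dots> \<le> (\<Sum>H\<in>Fam V \<kappa> m. \<Prod>e\<in>H. \<phi> e)"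
    using Fam_finite[OF V] l1 by (intro sum_mono2) (auto simp: Bad_def \<phi>_def intro: prod_nonneg)
  also have "\<dots> \<le> card (Fam V \<kappa> m) * (1 + t * q) ^ m" by (rule sumbound)
  finally have A: "real (card Bad) * l powr ((q + \<delta>) * m) \<le> card (Fam V \<kappa> m) * (1 + t * q) ^ m" .
  have lp: "l powr ((q + \<delta>) * m) > 0" using l1 by simp
  have "(1 + t * q) ^ m = exp (m * ln (1 + t * q))"
  proof -
    have "t * q \<ge> 0" using q01 d by (simp add: t_def)
    then have "1 + t * q > 0" by linarith
    then show ?thesis by (simp add: exp_of_nat_mult)
  qed
  moreover have "l powr ((q + \<delta>) * m) = exp ((q + \<delta>) * m * ln l)"
    using l1 by (simp add: powr_def)
  ultimately have "(1 + t * q) ^ m / l powr ((q + \<delta>) * m) = exp (m * (ln (1 + t * q) - (q + \<delta>) * ln l))"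
    by (simp add: exp_diff[symmetric] algebra_simps)
  also have "\<dots> \<le> exp (m * (- (\<delta>^2 / 8)))"
    using exponent_bound[OF q01 d] unfolding l_def t_def by (intro exp_mono mult_left_mono) auto
  finally have B: "(1 + t * q) ^ m / l powr ((q + \<delta>) * m) \<le> exp (- (\<delta>^2 / 8) * m)"
    by (simp add: algebra_simps)
  have "real (card Bad) \<le> card (Fam V \<kappa> m) * (1 + t * q) ^ m / l powr ((q + \<delta>) * m)"
    using A lp by (simp add: field_simps)
  also have "\<dots> = card (Fam V \<kappa> m) * ((1 + t * q) ^ m / l powr ((q + \<delta>) * m))" by simp
  also have "\<dots> \<le> card (Fam V \<kappa> m) * exp (- (\<delta>^2 / 8) * m)"
    using B by (intro mult_left_mono) auto
  finally show ?thesis unfolding Bad_def q_def by (simp add: mult.commute)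
qed


lemma hyp_eq: "oriented_hypergraphs a n m = Fam (oriented_edges a n) set m"
  unfolding oriented_hypergraphs_def Fam_def by simp

lemma finite_edges: "finite (oriented_edges a n)"
proof -
  have "oriented_edges a n \<subseteq> {xs. set xs \<subseteq> {1..n} \<and> length xs = a}"
    unfolding oriented_edges_def by auto
  then show ?thesis by (rule finite_subset) (simp add: finite_lists_length_eq)
qed

lemma fibers:
  assumes "x \<in> set ` oriented_edges a n"
  shows "card {e \<in> oriented_edges a n. set e = x} = fact a"
proof -
  obtain e0 where e0: "e0 \<in> oriented_edges a n" "x = set e0" using assms by auto
  have cx: "card x = a" using e0 distinct_card unfolding oriented_edges_def by fastforce
  have xs: "x \<subseteq> {1..n}" using e0 unfolding oriented_edges_def by auto
  have "{e \<in> oriented_edges a n. set e = x} = permutations_of_set x"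
    unfolding oriented_edges_def permutations_of_set_def using cx xs
    by (auto simp: distinct_card)
  then show ?thesis using cx e0 by simp
qed

lemma card_color_lists:
  assumes "finite X"
  shows "card {e. set e \<subseteq> X \<and> map C e = s} = (\<Prod>i<length s. card {v\<in>X. C v = s ! i})"
proof (induction s)
  case Nil
  have "{e. set e \<subseteq> X \<and> map C e = []} = {[]}" by auto
  then show ?case by simp
next
  case (Cons c s)
  have eq: "{e. set e \<subseteq> X \<and> map C e = c # s} =
      (\<lambda>(v, e). v # e) ` ({v\<in>X. C v = c} \<times> {e. set e \<subseteq> X \<and> map C e = s})"
    by (auto simp: Cons_eq_map_conv)
  have inj: "inj_on (\<lambda>(v, e). v # e) X'" for X' :: "('a \<times> 'a list) set"
    by (rule inj_onI) auto
  show ?case unfolding eq card_image[OF inj] card_cartesian_product Cons.IH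
    by (simp only: length_Cons prod.lessThan_Suc_shift nth_Cons_0 nth_Cons_Suc)
qed


lemma real_pq:
  fixes A g N D :: real
  assumes "0 \<le> g" "g \<le> A" "A - g \<le> N - D" "g \<le> D" "A \<le> N" "D \<le> N" "0 < D"
  shows "\<bar>A / N - g / D\<bar> \<le> N / D - 1"
proof -
  have N0: "N > 0" using assms by linarith
  have 1: "g / D - A / N \<le> (N - D) / D"
  proof -
    have "g / D - A / N \<le> A / D - A / N" using assms by (simp add: divide_right_mono)
    also have "\<dots> = A * (N - D) / (D * N)" using N0 assms by (simp add: field_simps)
    also have "\<dots> \<le> N * (N - D) / (D * N)"
      using assms N0 by (intro divide_right_mono mult_right_mono) auto
    also have "\<dots> = (N - D) / D" using N0 by simp
    finally show ?thesis .
  qed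
  have 2: "A / N - g / D \<le> (N - D) / D"
  proof -
    have "A / N - g / D \<le> A / N - g / N" using assms N0
      by (simp add: frac_le)
    also have "\<dots> = (A - g) / N" by (simp add: diff_divide_distrib)
    also have "\<dots> \<le> (N - D) / N" using assms N0 by (simp add: divide_right_mono)
    also have "\<dots> \<le> (N - D) / D" using assms by (intro divide_left_mono) auto
    finally show ?thesis .
  qed
  have "(N - D) / D = N / D - 1" using assms by (simp add: field_simps)
  then show ?thesis using 1 2 by linarith
qed

lemma p_q_close:
  assumes an: "a \<le> n" and s: "length s = a"
  shows "\<bar>(\<Prod>i<a. real (color_count n C (s ! i)) / real n)
          - real (card {e\<in>oriented_edges a n. map C e = s}) / real (card (oriented_edges a n))\<bar>
         \<le> real n ^ a / real (card (oriented_edges a n)) - 1"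
proof -
  define V where "V = oriented_edges a n"
  define G where "G = {e\<in>V. map C e = s}"
  define AA where "AA = {e. set e \<subseteq> {1..n} \<and> map C e = s}"
  define L where "L = {e. set e \<subseteq> {1..n} \<and> length e = a}"
  have fL: "finite L" unfolding L_def by (simp add: finite_lists_length_eq)
  have cL: "card L = n ^ a" unfolding L_def by (simp add: card_lists_length_eq)
  have AL: "AA \<subseteq> L" unfolding AA_def L_def using s by auto
  have VL: "V \<subseteq> L" unfolding V_def L_def oriented_edges_def by auto
  have GA: "G \<subseteq> AA" unfolding G_def AA_def V_def oriented_edges_def by auto
  have GV: "G \<subseteq> V" unfolding G_def by auto
  have AGLV: "AA - G \<subseteq> L - V" unfolding AA_def G_def L_def V_def oriented_edges_def using s by auto
  have fA: "finite AA" using AL fL finite_subset by blast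
  have fV: "finite V" using VL fL finite_subset by blast
  have cA: "card AA = (\<Prod>i<a. color_count n C (s ! i))"
    unfolding AA_def color_count_def using card_color_lists[of "{1..n}" C s] s by simp
  have "[1..<Suc a] \<in> V" unfolding V_def oriented_edges_def using an by auto
  then have D0: "card V > 0" using fV card_gt_0_iff by blast
  have fG: "finite G" using GV fV finite_subset by blast
  have c2: "card G \<le> card AA" "card G \<le> card V" "card AA \<le> card L" "card V \<le> card L"
    using card_mono[OF fA GA] card_mono[OF fV GV] card_mono[OF fL AL] card_mono[OF fL VL] by auto
  have "card (AA - G) \<le> card (L - V)" using fL AGLV by (intro card_mono) auto
  then have c1: "card AA - card G \<le> card L - card V"
    using card_Diff_subset[OF fG GA] card_Diff_subset[OF fV VL] by simp
  have "real (card AA - card G) \<le> real (card L - card V)" using c1 by (simp only: of_nat_le_iff)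
  then have c1': "real (card AA) - real (card G) \<le> real (card L) - real (card V)"
    using c2 by (simp add: of_nat_diff)
  have "(\<Prod>i<a. real (color_count n C (s ! i)) / real n) = real (card AA) / real (card L)"
    unfolding cA cL by (simp add: prod_dividef)
  then show ?thesis
    using real_pq[of "real (card G)" "real (card AA)" "real (card L)" "real (card V)"] c1' c2 D0
    unfolding G_def V_def cL by simp
qed


lemma tail_two:
  assumes an: "a \<le> n" and d: "0 < \<delta>" "\<delta> \<le> 1"
  shows "real (card {H \<in> oriented_hypergraphs a n m.
            \<delta> * m < \<bar>real (edges_with_colors H C s)
              - real (card {e\<in>oriented_edges a n. map C e = s}) / real (card (oriented_edges a n)) * m\<bar>})
         \<le> 2 * exp (- (\<delta>^2 / 8) * m) * card (oriented_hypergraphs a n m)"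
proof -
  define V where "V = oriented_edges a n"
  define G where "G = {e\<in>V. map C e = s}"
  define q where "q = real (card G) / real (card V)"
  define F where "F = Fam V set m"
  define B1 where "B1 = {H\<in>Fam V set m. real (card (H \<inter> G)) \<ge> (card G / card V + \<delta>) * m}"
  define B2 where "B2 = {H\<in>Fam V set m. real (card (H \<inter> (V - G))) \<ge> (card (V - G) / card V + \<delta>) * m}"
  have fV: "finite V" unfolding V_def by (rule finite_edges)
  have GV: "G \<subseteq> V" unfolding G_def by auto
  have fG: "finite G" using GV fV finite_subset by blast
  have fib: "\<forall>x\<in>set`V. card {e\<in>V. set e = x} = fact a" unfolding V_def using fibers by blast
  have "[1..<Suc a] \<in> V" unfolding V_def oriented_edges_def using an by auto
  then have D0: "card V > 0" using fV card_gt_0_iff by blast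
  have cVG: "real (card (V - G)) / real (card V) = 1 - q"
    using card_Diff_subset[OF fG GV] card_mono[OF fV GV] D0 unfolding q_def
    by (simp add: of_nat_diff field_simps)
  have sub: "{H \<in> oriented_hypergraphs a n m.
            \<delta> * m < \<bar>real (edges_with_colors H C s) - q * m\<bar>} \<subseteq> B1 \<union> B2"
  proof
    fix H assume H: "H \<in> {H \<in> oriented_hypergraphs a n m. \<delta> * m < \<bar>real (edges_with_colors H C s) - q * m\<bar>}"
    then have HF: "H \<in> Fam V set m" and dev: "\<delta> * m < \<bar>real (edges_with_colors H C s) - q * m\<bar>"
      unfolding hyp_eq V_def by auto
    have HV: "H \<subseteq> V" and cH: "card H = m" using HF unfolding Fam_def by auto
    have fH: "finite H" using HV fV finite_subset by blast
    have X: "edges_with_colors H C s = card (H \<inter> G)"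
      unfolding edges_with_colors_def G_def using HV by (intro arg_cong[where f=card]) auto
    have Y: "card (H \<inter> (V - G)) = m - card (H \<inter> G)"
    proof -
      have "H \<inter> (V - G) = H - (H \<inter> G)" using HV by auto
      then show ?thesis using card_Diff_subset[of "H \<inter> G" H] fH cH by auto
    qed
    have le: "card (H \<inter> G) \<le> m" using cH fH by (metis Int_lower1 card_mono)
    show "H \<in> B1 \<union> B2"
    proof (cases "real (card (H \<inter> G)) \<ge> q * m")
      case True
      then have "(q + \<delta>) * m \<le> real (card (H \<inter> G))" using dev unfolding X by (simp add: algebra_simps)
      then show ?thesis using HF unfolding B1_def q_def by auto
    next
      case False
      then have "(1 - q + \<delta>) * m \<le> real m - real (card (H \<inter> G))"
        using dev unfolding X by (simp add: algebra_simps)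
      then have "(card (V - G) / card V + \<delta>) * m \<le> real (card (H \<inter> (V - G)))"
        unfolding Y cVG using le by (simp add: of_nat_diff)
      then show ?thesis using HF unfolding B2_def by auto
    qed
  qed
  have fF: "finite (Fam V set m)" using Fam_finite[OF fV] .
  have "card {H \<in> oriented_hypergraphs a n m.
            \<delta> * m < \<bar>real (edges_with_colors H C s) - q * m\<bar>} \<le> card (B1 \<union> B2)"
    using fF by (intro card_mono[OF _ sub]) (auto simp: B1_def B2_def)
  also have "\<dots> \<le> card B1 + card B2" by (rule card_Un_le)
  finally have "real (card {H \<in> oriented_hypergraphs a n m.
            \<delta> * m < \<bar>real (edges_with_colors H C s) - q * m\<bar>}) \<le> real (card B1) + real (card B2)"
    by linarith
  also have "\<dots> \<le> exp (- (\<delta>^2 / 8) * m) * card (Fam V set m) + exp (- (\<delta>^2 / 8) * m) * card (Fam V set m)"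
    unfolding B1_def B2_def
    using GV by (intro add_mono concentration[OF fV _ fib d]) auto
  finally show ?thesis unfolding q_def G_def V_def hyp_eq by (simp add: algebra_simps)
qed


lemma bad_bound:
  assumes an: "a \<le> n" and d: "0 < \<delta>" "\<delta> \<le> 1" "\<delta> \<le> \<epsilon> / 2"
    and close: "real n ^ a / real (card (oriented_edges a n)) - 1 \<le> \<epsilon> / 2"
  shows "real (card {H \<in> oriented_hypergraphs a n m. \<not> well_distributed a b n m \<epsilon> H})
       \<le> real b ^ n * real b ^ a * (2 * exp (- (\<delta>^2 / 8) * m) * card (oriented_hypergraphs a n m))"
proof -
  define V where "V = oriented_edges a n"
  define F where "F = oriented_hypergraphs a n m"
  define Cs where "Cs = PiE {1..n} (\<lambda>_. {1..b})"
  define Ss where "Ss = {s. set s \<subseteq> {1..b} \<and> length s = a}"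
  define T where "T C s = {H \<in> F. \<delta> * m < \<bar>real (edges_with_colors H C s)
              - real (card {e\<in>V. map C e = s}) / real (card V) * m\<bar>}" for C s
  define bnd where "bnd = 2 * exp (- (\<delta>^2 / 8) * m) * card F"
  have fCs: "finite Cs" unfolding Cs_def by (simp add: finite_PiE)
  have fSs: "finite Ss" unfolding Ss_def by (simp add: finite_lists_length_eq)
  have cCs: "card Cs = b ^ n" unfolding Cs_def by (simp add: card_PiE)
  have cSs: "card Ss = b ^ a" unfolding Ss_def by (simp add: card_lists_length_eq)
  have fF: "finite F" unfolding F_def hyp_eq using Fam_finite[OF finite_edges] .
  have sub: "{H \<in> F. \<not> well_distributed a b n m \<epsilon> H} \<subseteq> (\<Union>C\<in>Cs. \<Union>s\<in>Ss. T C s)"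
  proof
    fix H assume H: "H \<in> {H \<in> F. \<not> well_distributed a b n m \<epsilon> H}"
    then have HF: "H \<in> F" by auto
    then have HV: "H \<subseteq> V" unfolding F_def V_def oriented_hypergraphs_def by auto
    from H obtain C s where C: "\<forall>v\<in>{1..n}. C v \<in> {1..b}" and s: "length s = a" "set s \<subseteq> {1..b}"
      and nd: "\<not> ((\<Prod>i<a. real (color_count n C (s ! i)) / real n) - \<epsilon>) * m \<le> real (edges_with_colors H C s)
             \<or> \<not> real (edges_with_colors H C s) \<le> ((\<Prod>i<a. real (color_count n C (s ! i)) / real n) + \<epsilon>) * m"
      unfolding well_distributed_def Let_def by auto
    define C' where "C' = restrict C {1..n}"
    have C'Cs: "C' \<in> Cs" unfolding C'_def Cs_def using C by auto
    have sSs: "s \<in> Ss" unfolding Ss_def using s by auto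
    have mapeq: "map C' e = map C e" if "e \<in> V" for e
      using that unfolding C'_def V_def oriented_edges_def by (intro map_cong) auto
    have Xeq: "edges_with_colors H C' s = edges_with_colors H C s"
      unfolding edges_with_colors_def using HV mapeq by (intro arg_cong[where f=card]) auto
    have Geq: "{e\<in>V. map C' e = s} = {e\<in>V. map C e = s}" using mapeq by auto
    define p where "p = (\<Prod>i<a. real (color_count n C (s ! i)) / real n)"
    define q where "q = real (card {e\<in>V. map C e = s}) / real (card V)"
    have pq: "\<bar>p - q\<bar> \<le> \<epsilon> / 2"
      using p_q_close[OF an s(1), of C] close unfolding p_def q_def V_def by linarith
    have dev: "\<epsilon> * m < \<bar>real (edges_with_colors H C s) - p * m\<bar>"
      using nd unfolding p_def by (auto simp: algebra_simps)
    have "\<bar>p * m - q * m\<bar> = \<bar>p - q\<bar> * m" by (simp add: abs_mult left_diff_distrib[symmetric])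
    also have "\<dots> \<le> \<epsilon> / 2 * m" using pq by (intro mult_right_mono) auto
    finally have "\<bar>p * m - q * m\<bar> \<le> \<epsilon> / 2 * m" .
    then have "\<delta> * m < \<bar>real (edges_with_colors H C s) - q * m\<bar>"
      using dev d mult_right_mono[OF d(3), of "real m"] by linarith
    then have "H \<in> T C' s" unfolding T_def using HF Xeq Geq q_def by simp
    then show "H \<in> (\<Union>C\<in>Cs. \<Union>s\<in>Ss. T C s)" using C'Cs sSs by blast
  qed
  have Tb: "real (card (T C s)) \<le> bnd" for C s
    unfolding T_def bnd_def V_def F_def using tail_two[OF an d(1,2), of m C s] by simp
  have "card {H \<in> F. \<not> well_distributed a b n m \<epsilon> H} \<le> card (\<Union>C\<in>Cs. \<Union>s\<in>Ss. T C s)"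
  proof (rule card_mono[OF _ sub])
    have "(\<Union>C\<in>Cs. \<Union>s\<in>Ss. T C s) \<subseteq> F" unfolding T_def by auto
    then show "finite (\<Union>C\<in>Cs. \<Union>s\<in>Ss. T C s)" using fF finite_subset by blast
  qed
  also have "\<dots> \<le> (\<Sum>C\<in>Cs. card (\<Union>s\<in>Ss. T C s))" by (rule card_UN_le[OF fCs])
  also have "\<dots> \<le> (\<Sum>C\<in>Cs. \<Sum>s\<in>Ss. card (T C s))" by (intro sum_mono card_UN_le[OF fSs])
  finally have "real (card {H \<in> F. \<not> well_distributed a b n m \<epsilon> H}) \<le> (\<Sum>C\<in>Cs. \<Sum>s\<in>Ss. real (card (T C s)))"
    by (simp only: of_nat_le_iff of_nat_sum[symmetric])
  also have "\<dots> \<le> (\<Sum>C\<in>Cs. \<Sum>s\<in>Ss. bnd)" by (intro sum_mono Tb)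
  also have "\<dots> = real b ^ n * real b ^ a * bnd" by (simp add: cCs cSs)
  finally show ?thesis unfolding F_def bnd_def .
qed


lemma lim_ratio: "((\<lambda>n. real n / (real n - real a + 1)) \<longlongrightarrow> 1) sequentially"
proof -
  have inf: "filterlim (\<lambda>n. (1 - real a) + real n) at_top sequentially"
    by (rule filterlim_tendsto_add_at_top[OF tendsto_const filterlim_real_sequentially])
  have "((\<lambda>n. (real a - 1) / ((1 - real a) + real n)) \<longlongrightarrow> 0) sequentially"
    by (rule tendsto_divide_0[OF tendsto_const filterlim_at_top_imp_at_infinity[OF inf]])
  then have lim0: "((\<lambda>n. 1 + (real a - 1) / ((1 - real a) + real n)) \<longlongrightarrow> 1) sequentially"
    using tendsto_add[OF tendsto_const, of _ 0 sequentially 1] by simp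
  have "eventually (\<lambda>n. 1 + (real a - 1) / ((1 - real a) + real n) = real n / (real n - real a + 1)) sequentially"
    using eventually_ge_at_top[of "a"]
  proof eventually_elim
    case (elim n)
    then have "(1 - real a) + real n > 0" by simp
    then show ?case by (simp add: field_simps)
  qed
  then show ?thesis by (rule Lim_transform_eventually[OF lim0])
qed


lemma card_edges_lower:
  assumes "a \<le> n"
  shows "real (card (oriented_edges a n)) \<ge> (real n - real a + 1) ^ a"
proof -
  have eq: "oriented_edges a n = {xs. length xs = a \<and> distinct xs \<and> set xs \<subseteq> {1..n}}"
    unfolding oriented_edges_def by auto
  have c: "card (oriented_edges a n) = \<Prod>{n - a + 1..n}"
    unfolding eq using card_lists_distinct_length_eq[of "{1..n}" a] assms by simp
  have "(n - a + 1) ^ a = (\<Prod>i\<in>{n - a + 1..n}. n - a + 1)"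
    using assms by simp
  also have "\<dots> \<le> \<Prod>{n - a + 1..n}" by (intro prod_mono) auto
  finally have "real ((n - a + 1) ^ a) \<le> real (card (oriented_edges a n))"
    unfolding c by (simp only: of_nat_le_iff)
  then show ?thesis using assms by (simp add: of_nat_diff add.commute)
qed

lemma eventually_close:
  assumes e: "\<epsilon> > 0"
  shows "eventually (\<lambda>n. a \<le> n \<and> real n ^ a / real (card (oriented_edges a n)) - 1 \<le> \<epsilon> / 2) sequentially"
proof -
  have "((\<lambda>n. (real n / (real n - real a + 1)) ^ a) \<longlongrightarrow> 1 ^ a) sequentially"
    by (intro tendsto_power lim_ratio)
  then have "eventually (\<lambda>n. (real n / (real n - real a + 1)) ^ a < 1 + \<epsilon> / 2) sequentially"
    using e by (intro order_tendstoD) auto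
  moreover have "eventually (\<lambda>n. a \<le> n) sequentially" by (rule eventually_ge_at_top)
  ultimately show ?thesis
  proof eventually_elim
    case (elim n)
    have pos: "real n - real a + 1 > 0" using elim(2) by simp
    have "real n ^ a / real (card (oriented_edges a n)) \<le> real n ^ a / (real n - real a + 1) ^ a"
    proof (rule divide_left_mono)
      show "(real n - real a + 1) ^ a \<le> real (card (oriented_edges a n))"
        by (rule card_edges_lower[OF elim(2)])
      have "0 < (real n - real a + 1) ^ a" using pos by simp
      then show "0 < real (card (oriented_edges a n)) * (real n - real a + 1) ^ a"
        using card_edges_lower[OF elim(2)] by (intro mult_pos_pos) auto
    qed simp
    also have "\<dots> = (real n / (real n - real a + 1)) ^ a" by (simp add: power_divide)
    finally show ?case using elim by linarith
  qed
qed

lemma eventually_small: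
  fixes m :: "nat \<Rightarrow> nat" and k c :: real and b :: nat
  assumes lim: "filterlim (\<lambda>n. real (m n) / real n) at_top sequentially"
    and k: "k > 0" and c: "c > 0" and b: "b \<ge> 1"
  shows "eventually (\<lambda>n. real b ^ n * real b ^ a * (2 * exp (- k * m n)) \<le> c) sequentially"
proof -
  have "eventually (\<lambda>n. real (m n) / real n \<ge> (ln b + 1) / k) sequentially"
    using lim by (simp add: filterlim_at_top)
  moreover have "eventually (\<lambda>n. n \<ge> max 1 (nat \<lceil>2 * real b ^ a / c\<rceil>)) sequentially"
    by (rule eventually_ge_at_top)
  ultimately show ?thesis
  proof eventually_elim
    case (elim n)
    have n0: "real n > 0" using elim(2) by simp
    have lb: "ln (real b) \<ge> 0" using b by simp
    have "(ln b + 1) * n \<le> k * m n"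
      using elim(1) n0 k by (simp add: field_simps)
    have bn: "real b ^ n = exp (n * ln b)" using b by (simp add: exp_of_nat_mult)
    have "real b ^ n * exp (- k * m n) = exp (n * ln b + (- k * m n))"
      unfolding bn by (simp only: exp_add)
    also have "\<dots> \<le> exp (- real n)"
      using \<open>(ln b + 1) * n \<le> k * m n\<close> by (simp add: algebra_simps)
    finally have A: "real b ^ n * exp (- k * m n) \<le> exp (- real n)" .
    have "1 + real n \<le> exp (real n)" by (rule exp_ge_add_one_self)
    then have "real n \<le> exp (real n)" by linarith
    then have B: "exp (- real n) \<le> 1 / real n" using n0
      by (simp add: exp_minus field_simps)
    have bp: "real b ^ a > 0" using b by simp
    have "nat \<lceil>2 * real b ^ a / c\<rceil> \<le> n" using elim(2) by simp
    then have "real (nat \<lceil>2 * real b ^ a / c\<rceil>) \<le> real n" by (simp only: of_nat_le_iff)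
    moreover have "2 * real b ^ a / c \<le> real (nat \<lceil>2 * real b ^ a / c\<rceil>)" by (rule real_nat_ceiling_ge)
    ultimately have "2 * real b ^ a / c \<le> real n" by linarith
    then have C: "2 * real b ^ a * (1 / real n) \<le> c" using n0 c by (simp add: field_simps)
    have "real b ^ n * real b ^ a * (2 * exp (- k * m n)) = 2 * real b ^ a * (real b ^ n * exp (- k * m n))"
      by simp
    also have "\<dots> \<le> 2 * real b ^ a * (1 / real n)"
      using A B bp by (intro mult_left_mono) auto
    finally show ?case using C by linarith
  qed
qed


theorem lemma13:
  fixes a b :: nat and \<epsilon> :: real and m :: "nat \<Rightarrow> nat"
  assumes "a \<ge> 2" and "b \<ge> 2" and "\<epsilon> > 0"
    and "filterlim (\<lambda>n. real (m n) / real n) at_top sequentially"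
  shows "(\<lambda>n. real (card {H \<in> oriented_hypergraphs a n (m n).
                     \<not> well_distributed a b n (m n) \<epsilon> H}))
         \<in> o(\<lambda>n. real (card (oriented_hypergraphs a n (m n))))"
proof (rule landau_o.smallI)
  fix c :: real assume c: "c > 0"
  define \<delta> where "\<delta> = min (\<epsilon> / 2) 1"
  have d: "0 < \<delta>" "\<delta> \<le> 1" "\<delta> \<le> \<epsilon> / 2" using assms(3) by (auto simp: \<delta>_def)
  have k: "\<delta>^2 / 8 > 0" using d by simp
  have b1: "b \<ge> 1" using assms(2) by simp
  show "eventually (\<lambda>n. norm (real (card {H \<in> oriented_hypergraphs a n (m n).
                     \<not> well_distributed a b n (m n) \<epsilon> H}))
          \<le> c * norm (real (card (oriented_hypergraphs a n (m n))))) sequentially"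
    using eventually_close[OF assms(3), of a] eventually_small[OF assms(4) k c b1, of a]
  proof eventually_elim
    case (elim n)
    have "real (card {H \<in> oriented_hypergraphs a n (m n). \<not> well_distributed a b n (m n) \<epsilon> H})
        \<le> real b ^ n * real b ^ a * (2 * exp (- (\<delta>^2 / 8) * m n) * card (oriented_hypergraphs a n (m n)))"
      using bad_bound[of a n \<delta> \<epsilon> "m n" b] elim(1) d by blast
    also have "\<dots> = (real b ^ n * real b ^ a * (2 * exp (- (\<delta>^2 / 8) * m n))) * card (oriented_hypergraphs a n (m n))"
      by simp
    also have "\<dots> \<le> c * card (oriented_hypergraphs a n (m n))"
      using elim(2) by (intro mult_right_mono) auto
    finally show ?case by simp
  qed
qed

end
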